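(* Let $f(X)=N(N-1)\sum_{i=1}^{\ell}\beta_i\,t(H_i,X)$ be a subgraph-counting function. Let $X,Y\in\{0,1\}^n$ differ only in a single index $k$, let $j$ be an index, and let $e_j,e_k$ be the edges (vertex pairs) corresponding to $j,k$. If $e_j$ and $e_k$ share a common vertex, then $$|\partial_jf(X)-\partial_jf(Y)|\le\sum_{i=1}^{\ell}\frac{2|\beta_i|\,|E(H_i)|^2}{\sqrt n}.$$ If $e_j$ and $e_k$ do not share a common vertex, then $$|\partial_jf(X)-\partial_jf(Y)|\le\sum_{i=1}^{\ell}\frac{6|\beta_i|\,|E(H_i)|^2}{n}.$$
   Context: $n=\binom N2$; $X\in\{0,1\}^n$ is identified with a simple graph on $[N]$, coordinates indexed by unordered vertex pairs. For a finite simple graph $H$ on $[m]$, $t(H,X)$ is the number of injective homomorphisms $H\to X$ divided by $N(N-1)\cdots(N-m+1)$. $\partial_jf(X)=\frac12\big(f(X\text{ with coordinate }j\text{ set to }1)-f(X\text{ with coordinate }j\text{ set to }0)\big)$. *)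

theory Defs
  imports Complex_Main "HOL-Library.FuncSet"
begin

text \<open>A point X of {0,1}^n, n = N choose 2, is identified with the set of pairs
  whose coordinate is 1, i.e. a subset of vertex_pairs N.\<close>
definition vertex_pairs :: "nat \<Rightarrow> nat set set" where
  "vertex_pairs N = {e. \<exists>a b. a < N \<and> b < N \<and> a \<noteq> b \<and> e = {a, b}}"

definition inj_homs :: "nat \<Rightarrow> nat set set \<Rightarrow> nat \<Rightarrow> nat set set \<Rightarrow> (nat \<Rightarrow> nat) set" where
  "inj_homs m E N X =
     {\<phi> \<in> {0..<m} \<rightarrow>\<^sub>E {0..<N}. inj_on \<phi> {0..<m} \<and> (\<forall>e\<in>E. \<phi> ` e \<in> X)}"

definition hom_density :: "nat \<Rightarrow> nat set set \<Rightarrow> nat \<Rightarrow> nat set set \<Rightarrow> real" where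
  "hom_density m E N X = real (card (inj_homs m E N X)) / (\<Prod>i<m. (real N - real i))"

definition subgraph_count ::
  "nat \<Rightarrow> nat \<Rightarrow> (nat \<Rightarrow> real) \<Rightarrow> (nat \<Rightarrow> nat) \<Rightarrow> (nat \<Rightarrow> nat set set) \<Rightarrow> nat set set \<Rightarrow> real" where
  "subgraph_count N l \<beta> m E X =
     real N * (real N - 1) * (\<Sum>i=1..l. \<beta> i * hom_density (m i) (E i) N X)"

definition disc_deriv :: "(nat set set \<Rightarrow> real) \<Rightarrow> nat set \<Rightarrow> nat set set \<Rightarrow> real" where
  "disc_deriv F e X = (F (insert e X) - F (X - {e})) / 2"

end

theory Submission
  imports Defs
begin


lemma ext_card:
  assumes D: "finite D" and R: "finite R" and SD: "S \<subseteq> D" and inj: "inj_on \<psi> S" and SR: "\<psi> ` S \<subseteq> R"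
  shows "card {\<phi> \<in> D \<rightarrow>\<^sub>E R. inj_on \<phi> D \<and> (\<forall>t\<in>S. \<phi> t = \<psi> t)}
         = (\<Prod>i\<in>{0..<card D - card S}. (card R - card S - i))"
proof -
  let ?L = "{\<phi> \<in> D \<rightarrow>\<^sub>E R. inj_on \<phi> D \<and> (\<forall>t\<in>S. \<phi> t = \<psi> t)}"
  let ?M = "{g \<in> (D - S) \<rightarrow>\<^sub>E (R - \<psi>`S). inj_on g (D - S)}"
  have "bij_betw (\<lambda>\<phi>. restrict \<phi> (D - S)) ?L ?M"
  proof (rule bij_betw_byWitness[where f'="\<lambda>g t. if t \<in> S then \<psi> t else g t"])
    show "\<forall>\<phi>\<in>?L. (\<lambda>t. if t \<in> S then \<psi> t else restrict \<phi> (D - S) t) = \<phi>"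
    proof
      fix \<phi> assume "\<phi> \<in> ?L"
      then show "(\<lambda>t. if t \<in> S then \<psi> t else restrict \<phi> (D - S) t) = \<phi>"
        by (auto simp: PiE_def extensional_def)
    qed
    show "\<forall>g\<in>?M. restrict (\<lambda>t. if t \<in> S then \<psi> t else g t) (D - S) = g"
      by (auto simp: PiE_def extensional_def)
    show "(\<lambda>\<phi>. restrict \<phi> (D - S)) ` ?L \<subseteq> ?M"
    proof
      fix g assume "g \<in> (\<lambda>\<phi>. restrict \<phi> (D - S)) ` ?L"
      then obtain \<phi> where p: "\<phi> \<in> ?L" and g: "g = restrict \<phi> (D - S)" by blast
      have "\<phi> x \<notin> \<psi> ` S" if "x \<in> D - S" for x
      proof
        assume "\<phi> x \<in> \<psi> ` S"
        then obtain y where "y \<in> S" "\<phi> x = \<psi> y" by blast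
        have "inj_on \<phi> D" "\<phi> y = \<psi> y" using p \<open>y \<in> S\<close> by auto
        then have "x = y" using \<open>\<phi> x = \<psi> y\<close> that SD \<open>y \<in> S\<close> by (metis DiffD1 inj_onD subsetD)
        then show False using that \<open>y \<in> S\<close> by simp
      qed
      with p show "g \<in> ?M" unfolding g by (auto simp: inj_on_def)
    qed
    show "(\<lambda>g t. if t \<in> S then \<psi> t else g t) ` ?M \<subseteq> ?L"
    proof
      fix h assume "h \<in> (\<lambda>g t. if t \<in> S then \<psi> t else g t) ` ?M"
      then obtain g where g: "g \<in> ?M" and h: "h = (\<lambda>t. if t \<in> S then \<psi> t else g t)" by blast
      have "h \<in> D \<rightarrow>\<^sub>E R"
      proof (rule PiE_I)
        fix x assume "x \<in> D"
        then show "h x \<in> R" using g SR unfolding h by (cases "x \<in> S") (auto simp: PiE_iff)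
      next
        fix x assume "x \<notin> D"
        then show "h x = undefined" using g SD unfolding h by (auto simp: PiE_iff extensional_def)
      qed
      moreover have "inj_on h D"
      proof (rule inj_onI)
        fix x y assume xy: "x \<in> D" "y \<in> D" "h x = h y"
        have gi: "inj_on g (D - S)" and gr: "\<And>t. t \<in> D - S \<Longrightarrow> g t \<in> R - \<psi>`S" using g by auto
        show "x = y"
        proof (cases "x \<in> S"; cases "y \<in> S")
          assume "x \<in> S" "y \<in> S" then show ?thesis using xy inj unfolding h by (simp add: inj_onD)
        next
          assume "x \<in> S" "y \<notin> S" then show ?thesis using xy gr[of y] unfolding h by (metis DiffD2 DiffI image_eqI)
        next
          assume "x \<notin> S" "y \<in> S" then show ?thesis using xy gr[of x] unfolding h by (metis DiffD2 DiffI image_eqI)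
        next
          assume "x \<notin> S" "y \<notin> S" then show ?thesis using xy gi unfolding h by (simp add: inj_onD)
        qed
      qed
      ultimately show "h \<in> ?L" unfolding h by auto
    qed
  qed
  then have "card ?L = card ?M" by (rule bij_betw_same_card)
  also have "\<dots> = (\<Prod>i\<in>{0..<card D - card S}. (card R - card S - i))"
  proof -
    have fS: "finite S" using D SD finite_subset by blast
    have c1: "card (R - \<psi>`S) = card R - card S"
      using card_Diff_subset[OF finite_imageI[OF fS] SR] card_image[OF inj] by simp
    have c2: "card (D - S) = card D - card S" using card_Diff_subset[OF fS SD] .
    have "card ?M = card (R - \<psi>`S) ^ (card (D - S) - card (D - S)) * prod ((-) (card (R - \<psi>`S))) {0..<card (D - S)}"
      using card_inj_on_subset_funcset[of "D - S" "R - \<psi>`S" "D - S"] D R by blast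
    then show ?thesis unfolding c1 c2 by simp
  qed
  finally show ?thesis .
qed




lemma prod_split_aux:
  assumes "s + d \<le> N"
  shows "(\<Prod>i<s + d. (real N - real i)) = (\<Prod>i<s. (real N - real i)) * real (\<Prod>i\<in>{0..<d}. (N - s - i))"
  using assms
proof (induction d)
  case 0 then show ?case by simp
next
  case (Suc d)
  then have IH: "(\<Prod>i<s + d. (real N - real i)) = (\<Prod>i<s. (real N - real i)) * real (\<Prod>i\<in>{0..<d}. (N - s - i))" by simp
  have "(\<Prod>i<s + Suc d. (real N - real i)) = (\<Prod>i<s + d. (real N - real i)) * (real N - real (s + d))"
    by simp
  also have "real N - real (s + d) = real (N - s - d)" using Suc.prems by simp
  finally show ?case using IH by (simp add: prod.atLeast0_lessThan_Suc)
qed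

lemma prod_split:
  assumes "s \<le> m" "m \<le> N"
  shows "(\<Prod>i<m. (real N - real i)) = (\<Prod>i<s. (real N - real i)) * real (\<Prod>i\<in>{0..<m - s}. (N - s - i))"
  using prod_split_aux[of s "m - s" N] assms by simp




lemma vp_D: "e \<in> vertex_pairs N \<Longrightarrow> \<exists>x y. x \<noteq> y \<and> x < N \<and> y < N \<and> e = {x, y}"
  unfolding vertex_pairs_def by auto

lemma vp_finite: "e \<in> vertex_pairs N \<Longrightarrow> finite e"
  using vp_D by fastforce

lemma vp_card: "e \<in> vertex_pairs N \<Longrightarrow> card e = 2"
  using vp_D by fastforce

lemma vp_sub: "e \<in> vertex_pairs N \<Longrightarrow> e \<subseteq> {0..<N}"
  using vp_D by fastforce

lemma vp_ne: "e \<in> vertex_pairs N \<Longrightarrow> e \<noteq> {}"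
  using vp_D by fastforce

lemma vp_other: "e \<in> vertex_pairs N \<Longrightarrow> u \<in> e \<Longrightarrow> v \<in> e \<Longrightarrow> u \<noteq> z \<Longrightarrow> v \<noteq> z \<Longrightarrow> z \<in> e \<Longrightarrow> u = v"
  using vp_D by fastforce

lemma vp_int: "e \<in> vertex_pairs N \<Longrightarrow> f \<in> vertex_pairs N \<Longrightarrow> e \<noteq> f \<Longrightarrow>
    u \<in> e \<inter> f \<Longrightarrow> v \<in> e \<inter> f \<Longrightarrow> u = v"
  by (drule vp_D, drule vp_D) blast

lemma vp_diff: "e \<in> vertex_pairs N \<Longrightarrow> f \<in> vertex_pairs N \<Longrightarrow> e \<inter> f \<noteq> {} \<Longrightarrow>
    u \<in> e - f \<Longrightarrow> v \<in> e - f \<Longrightarrow> u = v"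
  by (drule vp_D, drule vp_D) blast

lemma vp_card3: "e \<in> vertex_pairs N \<Longrightarrow> f \<in> vertex_pairs N \<Longrightarrow> e \<noteq> f \<Longrightarrow> e \<inter> f \<noteq> {} \<Longrightarrow> card (e \<union> f) = 3"
proof -
  assume e: "e \<in> vertex_pairs N" and f: "f \<in> vertex_pairs N" and ne: "e \<noteq> f" and i: "e \<inter> f \<noteq> {}"
  have "card (e \<inter> f) = 1"
  proof -
    obtain u where "u \<in> e \<inter> f" using i by blast
    then have "e \<inter> f = {u}" using vp_int[OF e f ne] by blast
    then show ?thesis by simp
  qed
  moreover have "card (e \<union> f) + card (e \<inter> f) = card e + card f"
    using card_Un_Int[OF vp_finite[OF e] vp_finite[OF f]] by simp
  ultimately show ?thesis using vp_card[OF e] vp_card[OF f] by simp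
qed

lemma vp_card4: "e \<in> vertex_pairs N \<Longrightarrow> f \<in> vertex_pairs N \<Longrightarrow> e \<inter> f = {} \<Longrightarrow> card (e \<union> f) = 4"
  using card_Un_disjoint[OF vp_finite vp_finite] vp_card by fastforce

lemma C_bound:
  fixes a b :: "nat set" and D R :: "nat set"
  assumes D: "finite D" and R: "finite R" and a: "a \<subseteq> D" and b: "b \<subseteq> D"
  shows "card {\<phi> \<in> D \<rightarrow>\<^sub>E R. inj_on \<phi> D \<and> \<phi>`a = ej \<and> \<phi>`b = ek}
     \<le> card ((\<lambda>\<phi>. restrict \<phi> (a\<union>b)) ` {\<phi> \<in> D \<rightarrow>\<^sub>E R. inj_on \<phi> D \<and> \<phi>`a = ej \<and> \<phi>`b = ek})
        * (\<Prod>i\<in>{0..<card D - card (ej\<union>ek)}. (card R - card (ej\<union>ek) - i))"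
proof -
  define C where "C = {\<phi> \<in> D \<rightarrow>\<^sub>E R. inj_on \<phi> D \<and> \<phi>`a = ej \<and> \<phi>`b = ek}"
  define S where "S = a \<union> b"
  define \<Psi> where "\<Psi> = (\<lambda>\<phi>. restrict \<phi> S) ` C"
  define F where "F = (\<Prod>i\<in>{0..<card D - card (ej\<union>ek)}. (card R - card (ej\<union>ek) - i))"
  define Ext where "Ext \<psi> = {\<phi> \<in> D \<rightarrow>\<^sub>E R. inj_on \<phi> D \<and> (\<forall>t\<in>S. \<phi> t = \<psi> t)}" for \<psi>
  have SD: "S \<subseteq> D" using a b S_def by auto
  have finC: "finite C" unfolding C_def using finite_PiE[OF D, of "\<lambda>_. R"] R by (auto intro: finite_subset)
  then have finPsi: "finite \<Psi>" unfolding \<Psi>_def by simp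
  have sub: "C \<subseteq> (\<Union>\<psi>\<in>\<Psi>. Ext \<psi>)"
  proof
    fix \<phi> assume "\<phi> \<in> C"
    then have "\<phi> \<in> Ext (restrict \<phi> S)" "restrict \<phi> S \<in> \<Psi>" unfolding Ext_def C_def \<Psi>_def by auto
    then show "\<phi> \<in> (\<Union>\<psi>\<in>\<Psi>. Ext \<psi>)" by blast
  qed
  have cE: "card (Ext \<psi>) = F" if psin: "\<psi> \<in> \<Psi>" for \<psi>
  proof -
    obtain \<phi>0 where p0: "\<phi>0 \<in> C" and ps: "\<psi> = restrict \<phi>0 S" using psin \<Psi>_def by blast
    have inj0: "inj_on \<phi>0 S" using p0 SD unfolding C_def by (auto intro: inj_on_subset)
    have img: "\<phi>0 ` S = ej \<union> ek" using p0 unfolding C_def S_def by auto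
    have R0: "\<phi>0 ` S \<subseteq> R" using p0 SD unfolding C_def by (auto simp: PiE_iff)
    have cs: "card S = card (ej \<union> ek)" using card_image[OF inj0] img by simp
    have "Ext \<psi> = {\<phi> \<in> D \<rightarrow>\<^sub>E R. inj_on \<phi> D \<and> (\<forall>t\<in>S. \<phi> t = \<phi>0 t)}"
      unfolding Ext_def ps by auto
    then show ?thesis using ext_card[OF D R SD inj0 R0] cs F_def by simp
  qed
  have "card C \<le> card (\<Union>\<psi>\<in>\<Psi>. Ext \<psi>)"
    using sub by (rule card_mono[rotated]) (use finPsi D R in \<open>auto simp: Ext_def intro!: finite_subset[OF _ finite_PiE[OF D, of "\<lambda>_. R"]]\<close>)
  also have "\<dots> \<le> (\<Sum>\<psi>\<in>\<Psi>. card (Ext \<psi>))" using card_UN_le[OF finPsi] by blast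
  also have "\<dots> = card \<Psi> * F" using cE by simp
  finally show ?thesis unfolding C_def \<Psi>_def S_def F_def .
qed




lemma C_props:
  assumes "\<phi> \<in> {\<phi> \<in> D \<rightarrow>\<^sub>E R. inj_on \<phi> D \<and> \<phi>`a = ej \<and> \<phi>`b = ek}" and a: "a \<subseteq> D" and b: "b \<subseteq> D"
  shows "t \<in> a \<Longrightarrow> \<phi> t \<in> ej" and "t \<in> b \<Longrightarrow> \<phi> t \<in> ek"
    and "t \<in> a \<Longrightarrow> t \<notin> b \<Longrightarrow> \<phi> t \<notin> ek" and "t \<in> b \<Longrightarrow> t \<notin> a \<Longrightarrow> \<phi> t \<notin> ej"
    and "t \<in> a \<Longrightarrow> t' \<in> a \<Longrightarrow> t \<noteq> t' \<Longrightarrow> \<phi> t \<noteq> \<phi> t'"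
    and "t \<in> b \<Longrightarrow> t' \<in> b \<Longrightarrow> t \<noteq> t' \<Longrightarrow> \<phi> t \<noteq> \<phi> t'"
proof -
  have inj: "inj_on \<phi> D" and ia: "\<phi>`a = ej" and ib: "\<phi>`b = ek" using assms(1) by auto
  show "t \<in> a \<Longrightarrow> \<phi> t \<in> ej" using ia by blast
  show "t \<in> b \<Longrightarrow> \<phi> t \<in> ek" using ib by blast
  show "t \<in> a \<Longrightarrow> t \<notin> b \<Longrightarrow> \<phi> t \<notin> ek"
  proof
    assume "t \<in> a" "t \<notin> b" "\<phi> t \<in> ek"
    then obtain t' where "t' \<in> b" "\<phi> t = \<phi> t'" using ib by auto
    then show False using inj a b \<open>t \<in> a\<close> \<open>t \<notin> b\<close> by (metis inj_onD subsetD)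
  qed
  show "t \<in> b \<Longrightarrow> t \<notin> a \<Longrightarrow> \<phi> t \<notin> ej"
  proof
    assume "t \<in> b" "t \<notin> a" "\<phi> t \<in> ej"
    then obtain t' where "t' \<in> a" "\<phi> t = \<phi> t'" using ia by auto
    then show False using inj a b \<open>t \<in> b\<close> \<open>t \<notin> a\<close> by (metis inj_onD subsetD)
  qed
  show "t \<in> a \<Longrightarrow> t' \<in> a \<Longrightarrow> t \<noteq> t' \<Longrightarrow> \<phi> t \<noteq> \<phi> t'" using inj a by (metis inj_onD subsetD)
  show "t \<in> b \<Longrightarrow> t' \<in> b \<Longrightarrow> t \<noteq> t' \<Longrightarrow> \<phi> t \<noteq> \<phi> t'" using inj b by (metis inj_onD subsetD)
qed

lemma Psi_le1:
  assumes D: "finite D" and R: "finite R" and a: "a \<subseteq> D" and b: "b \<subseteq> D"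
    and ej: "ej \<in> vertex_pairs N" and ek: "ek \<in> vertex_pairs N" and ne: "ej \<noteq> ek" and i: "ej \<inter> ek \<noteq> {}"
  shows "card ((\<lambda>\<phi>. restrict \<phi> (a\<union>b)) ` {\<phi> \<in> D \<rightarrow>\<^sub>E R. inj_on \<phi> D \<and> \<phi>`a = ej \<and> \<phi>`b = ek}) \<le> 1"
proof -
  define C where "C = {\<phi> \<in> D \<rightarrow>\<^sub>E R. inj_on \<phi> D \<and> \<phi>`a = ej \<and> \<phi>`b = ek}"
  have finC: "finite C" unfolding C_def using finite_PiE[OF D, of "\<lambda>_. R"] R by (auto intro: finite_subset)
  have eq: "restrict \<phi>1 (a\<union>b) = restrict \<phi>2 (a\<union>b)" if p1: "\<phi>1 \<in> C" and p2: "\<phi>2 \<in> C" for \<phi>1 \<phi>2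
  proof (rule restrict_ext)
    fix t assume t: "t \<in> a \<union> b"
    note P1 = C_props[OF p1[unfolded C_def] a b] and P2 = C_props[OF p2[unfolded C_def] a b]
    show "\<phi>1 t = \<phi>2 t"
    proof (cases "t \<in> a"; cases "t \<in> b")
      assume "t \<in> a" "t \<in> b"
      then show ?thesis using P1(1,2) P2(1,2) vp_int[OF ej ek ne] by blast
    next
      assume "t \<in> a" "t \<notin> b"
      then show ?thesis using P1(1,3) P2(1,3) vp_diff[OF ej ek i] by blast
    next
      assume "t \<notin> a" "t \<in> b"
      moreover have "ek \<inter> ej \<noteq> {}" using i by blast
      ultimately show ?thesis using P1(2,4) P2(2,4) vp_diff[OF ek ej] by blast
    next
      assume "t \<notin> a" "t \<notin> b" then show ?thesis using t by blast
    qed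
  qed
  have "card ((\<lambda>\<phi>. restrict \<phi> (a\<union>b)) ` C) \<le> Suc 0"
    using finC by (subst card_le_Suc0_iff_eq) (auto intro: eq)
  then show ?thesis unfolding C_def by simp
qed

lemma Psi_le4:
  assumes D: "finite D" and R: "finite R" and a: "a \<subseteq> D" and b: "b \<subseteq> D"
    and ej: "ej \<in> vertex_pairs N" and ek: "ek \<in> vertex_pairs N" and p: "p \<in> a" and w: "w \<in> b"
  shows "card ((\<lambda>\<phi>. restrict \<phi> (a\<union>b)) ` {\<phi> \<in> D \<rightarrow>\<^sub>E R. inj_on \<phi> D \<and> \<phi>`a = ej \<and> \<phi>`b = ek}) \<le> 4"
proof -
  define C where "C = {\<phi> \<in> D \<rightarrow>\<^sub>E R. inj_on \<phi> D \<and> \<phi>`a = ej \<and> \<phi>`b = ek}"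
  define \<Psi> where "\<Psi> = (\<lambda>\<phi>. restrict \<phi> (a\<union>b)) ` C"
  have eq: "restrict \<phi>1 (a\<union>b) = restrict \<phi>2 (a\<union>b)"
    if p1: "\<phi>1 \<in> C" and p2: "\<phi>2 \<in> C" and e1: "\<phi>1 p = \<phi>2 p" and e2: "\<phi>1 w = \<phi>2 w" for \<phi>1 \<phi>2
  proof (rule restrict_ext)
    fix t assume t: "t \<in> a \<union> b"
    note P1 = C_props[OF p1[unfolded C_def] a b] and P2 = C_props[OF p2[unfolded C_def] a b]
    show "\<phi>1 t = \<phi>2 t"
    proof (cases "t \<in> a")
      case True
      show ?thesis
      proof (cases "t = p")
        case False
        have "\<phi>1 t \<in> ej" "\<phi>2 t \<in> ej" "\<phi>1 t \<noteq> \<phi>1 p" "\<phi>2 t \<noteq> \<phi>2 p" "\<phi>1 p \<in> ej"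
          using P1(1)[OF True] P2(1)[OF True] P1(5)[OF True p False] P2(5)[OF True p False] P1(1)[OF p] by auto
        then show ?thesis using e1 vp_other[OF ej] by metis
      qed (use e1 in simp)
    next
      case False
      then have tb: "t \<in> b" using t by blast
      show ?thesis
      proof (cases "t = w")
        case False
        have "\<phi>1 t \<in> ek" "\<phi>2 t \<in> ek" "\<phi>1 t \<noteq> \<phi>1 w" "\<phi>2 t \<noteq> \<phi>2 w" "\<phi>1 w \<in> ek"
          using P1(2)[OF tb] P2(2)[OF tb] P1(6)[OF tb w False] P2(6)[OF tb w False] P1(2)[OF w] by auto
        then show ?thesis using e2 vp_other[OF ek] by metis
      qed (use e2 in simp)
    qed
  qed
  have "inj_on (\<lambda>\<psi>. (\<psi> p, \<psi> w)) \<Psi>"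
  proof (rule inj_onI)
    fix x y assume "x \<in> \<Psi>" "y \<in> \<Psi>" "(x p, x w) = (y p, y w)"
    then obtain \<phi>1 \<phi>2 where "\<phi>1 \<in> C" "\<phi>2 \<in> C" "x = restrict \<phi>1 (a\<union>b)" "y = restrict \<phi>2 (a\<union>b)"
      unfolding \<Psi>_def by blast
    moreover from this \<open>(x p, x w) = (y p, y w)\<close> have "\<phi>1 p = \<phi>2 p" "\<phi>1 w = \<phi>2 w" using p w by auto
    ultimately show "x = y" using eq by blast
  qed
  moreover have "(\<lambda>\<psi>. (\<psi> p, \<psi> w)) ` \<Psi> \<subseteq> ej \<times> ek"
    unfolding \<Psi>_def C_def using p w by auto
  ultimately have "card \<Psi> \<le> card (ej \<times> ek)"
    using card_inj_on_le vp_finite[OF ej] vp_finite[OF ek] by blast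
  also have "\<dots> = 4" using vp_card[OF ej] vp_card[OF ek] by (simp add: card_cartesian_product)
  finally show ?thesis unfolding \<Psi>_def C_def .
qed




lemma incl_excl:
  assumes ne: "ej \<noteq> ek" and j: "ej \<notin> G" and k: "ek \<notin> G"
  shows "int (card (inj_homs m E N (insert ej (insert ek G)))) - int (card (inj_homs m E N (insert ek G)))
           - int (card (inj_homs m E N (insert ej G))) + int (card (inj_homs m E N G))
         = int (card {\<phi> \<in> inj_homs m E N (insert ej (insert ek G)). (\<exists>a\<in>E. \<phi>`a = ej) \<and> (\<exists>b\<in>E. \<phi>`b = ek)})"
proof -
  define T where "T = inj_homs m E N (insert ej (insert ek G))"
  define A1 where "A1 = inj_homs m E N (insert ej G)"
  define A2 where "A2 = inj_homs m E N (insert ek G)"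
  define B where "B = {\<phi> \<in> T. (\<exists>a\<in>E. \<phi>`a = ej) \<and> (\<exists>b\<in>E. \<phi>`b = ek)}"
  have fin: "finite (inj_homs m E N S)" for S
    unfolding inj_homs_def by (rule finite_subset[OF _ finite_PiE[of "{0..<m}" "\<lambda>_. {0..<N}"]]) auto
  have mem: "\<phi> \<in> inj_homs m E N S \<longleftrightarrow> \<phi> \<in> {0..<m} \<rightarrow>\<^sub>E {0..<N} \<and> inj_on \<phi> {0..<m} \<and> (\<forall>e\<in>E. \<phi> ` e \<in> S)" for \<phi> S
    unfolding inj_homs_def by blast
  have i12: "A1 \<inter> A2 = inj_homs m E N G"
  proof (rule set_eqI)
    fix \<phi> show "\<phi> \<in> A1 \<inter> A2 \<longleftrightarrow> \<phi> \<in> inj_homs m E N G"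
    proof -
      have ins: "x \<in> insert ej G \<Longrightarrow> x \<in> insert ek G \<Longrightarrow> x \<in> G" for x using ne j k by auto
      have "(\<forall>e\<in>E. \<phi> ` e \<in> insert ej G) \<and> (\<forall>e\<in>E. \<phi> ` e \<in> insert ek G) \<longleftrightarrow> (\<forall>e\<in>E. \<phi> ` e \<in> G)"
        using ins by (meson insertCI)
      then show "\<phi> \<in> A1 \<inter> A2 \<longleftrightarrow> \<phi> \<in> inj_homs m E N G"
        unfolding A1_def A2_def Int_iff mem by meson
    qed
  qed
  have mono: "inj_homs m E N S \<subseteq> inj_homs m E N S'" if "S \<subseteq> S'" for S S'
  proof
    fix \<phi> assume "\<phi> \<in> inj_homs m E N S"
    then show "\<phi> \<in> inj_homs m E N S'" unfolding mem using that by (meson subsetD)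
  qed
  have TU: "T = B \<union> (A1 \<union> A2)"
  proof
    show "T \<subseteq> B \<union> (A1 \<union> A2)"
    proof
      fix \<phi> assume pT: "\<phi> \<in> T"
      have pT': "\<forall>e\<in>E. \<phi> ` e \<in> insert ej (insert ek G)" "\<phi> \<in> {0..<m} \<rightarrow>\<^sub>E {0..<N}" "inj_on \<phi> {0..<m}"
        using pT unfolding T_def mem by meson+
      show "\<phi> \<in> B \<union> (A1 \<union> A2)"
      proof (cases "(\<exists>a\<in>E. \<phi>`a = ej) \<and> (\<exists>b\<in>E. \<phi>`b = ek)")
        case True then have "\<phi> \<in> B" using pT unfolding B_def by simp
        then show ?thesis by (rule UnI1)
      next
        case False
        then consider "\<forall>a\<in>E. \<phi>`a \<noteq> ej" | "\<forall>b\<in>E. \<phi>`b \<noteq> ek" by meson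
        then show ?thesis
        proof cases
          case 1
          have r: "x \<in> insert ej (insert ek G) \<Longrightarrow> x \<noteq> ej \<Longrightarrow> x \<in> insert ek G" for x by simp
          have "\<forall>e\<in>E. \<phi> ` e \<in> insert ek G" using 1 pT'(1) r by meson
          then have "\<phi> \<in> A2" unfolding A2_def mem using pT' by meson
          then show ?thesis by (intro UnI2)
        next
          case 2
          have r: "x \<in> insert ej (insert ek G) \<Longrightarrow> x \<noteq> ek \<Longrightarrow> x \<in> insert ej G" for x by simp
          have "\<forall>e\<in>E. \<phi> ` e \<in> insert ej G" using 2 pT'(1) r by meson
          then have "\<phi> \<in> A1" unfolding A1_def mem using pT' by meson
          then show ?thesis by (intro UnI2 UnI1)
        qed
      qed
    qed
    have "B \<subseteq> T" unfolding B_def by (rule Collect_restrict)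
    moreover have "A1 \<subseteq> T" unfolding A1_def T_def by (rule mono) (rule insert_mono, rule subset_insertI)
    moreover have "A2 \<subseteq> T" unfolding A2_def T_def by (rule mono) (rule subset_insertI)
    ultimately show "B \<union> (A1 \<union> A2) \<subseteq> T" by (rule Un_least[OF _ Un_least])
  qed
  have disj: "B \<inter> (A1 \<union> A2) = {}"
  proof -
    have "\<phi> \<notin> A1 \<and> \<phi> \<notin> A2" if pB: "\<phi> \<in> B" for \<phi>
    proof -
      have "(\<exists>a\<in>E. \<phi>`a = ej) \<and> (\<exists>b\<in>E. \<phi>`b = ek)" using pB unfolding B_def by simp
      then obtain a b where ab: "a \<in> E" "\<phi>`a = ej" "b \<in> E" "\<phi>`b = ek" by meson
      have "ek \<notin> insert ej G" "ej \<notin> insert ek G" using ne j k by (simp_all add: ne[symmetric])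
      then have "\<phi>`b \<notin> insert ej G" "\<phi>`a \<notin> insert ek G" using ab by simp_all
      then show ?thesis unfolding A1_def A2_def mem using ab(1,3) by meson
    qed
    then show ?thesis by (meson IntE UnE equals0I)
  qed
  have fT: "finite T" unfolding T_def by (rule fin)
  have fB: "finite B" unfolding B_def using fT by simp
  have f1: "finite A1" unfolding A1_def by (rule fin)
  have f2: "finite A2" unfolding A2_def by (rule fin)
  have "card T = card B + card (A1 \<union> A2)" unfolding TU
    by (rule card_Un_disjoint[OF fB _ disj]) (use f1 f2 in simp)
  moreover have "card (A1 \<union> A2) + card (A1 \<inter> A2) = card A1 + card A2"
    using card_Un_Int[OF f1 f2] by simp
  ultimately have "int (card T) + int (card (A1 \<inter> A2)) = int (card B) + int (card A1) + int (card A2)"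
    by linarith
  then show ?thesis unfolding T_def[symmetric] A1_def[symmetric] A2_def[symmetric] B_def[symmetric]
    using i12 by simp
qed




definition Bfull :: "nat \<Rightarrow> nat set set \<Rightarrow> nat \<Rightarrow> nat set \<Rightarrow> nat set \<Rightarrow> (nat \<Rightarrow> nat) set" where
  "Bfull m E N ej ek = {\<phi> \<in> {0..<m} \<rightarrow>\<^sub>E {0..<N}. inj_on \<phi> {0..<m} \<and> (\<exists>a\<in>E. \<phi>`a = ej) \<and> (\<exists>b\<in>E. \<phi>`b = ek)}"

lemma B_sub_Bfull: "{\<phi> \<in> inj_homs m E N X. (\<exists>a\<in>E. \<phi>`a = ej) \<and> (\<exists>b\<in>E. \<phi>`b = ek)} \<subseteq> Bfull m E N ej ek"
  unfolding inj_homs_def Bfull_def by auto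

lemma Bfull_ratio:
  assumes EH: "E \<subseteq> vertex_pairs m" and ej: "ej \<in> vertex_pairs N" and ek: "ek \<in> vertex_pairs N"
    and K: "\<And>a b. a \<in> E \<Longrightarrow> b \<in> E \<Longrightarrow>
       card ((\<lambda>\<phi>. restrict \<phi> (a\<union>b)) ` {\<phi> \<in> {0..<m} \<rightarrow>\<^sub>E {0..<N}. inj_on \<phi> {0..<m} \<and> \<phi>`a = ej \<and> \<phi>`b = ek}) \<le> K"
    and s: "s = card (ej \<union> ek)"
  shows "real (card (Bfull m E N ej ek)) / (\<Prod>i<m. (real N - real i))
         \<le> real (card E)^2 * real K / (\<Prod>i<s. (real N - real i))"
proof -
  define C where "C a b = {\<phi> \<in> {0..<m} \<rightarrow>\<^sub>E {0..<N}. inj_on \<phi> {0..<m} \<and> \<phi>`a = ej \<and> \<phi>`b = ek}" for a b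
  define F where "F = (\<Prod>i\<in>{0..<m - s}. (N - s - i))"
  have finE: "finite E" using EH finite_subset[of E "Pow {0..<m}"] vp_sub by blast
  have sN: "s \<le> N"
  proof -
    have "ej \<union> ek \<subseteq> {0..<N}" using vp_sub[OF ej] vp_sub[OF ek] by blast
    then show ?thesis using s card_mono[of "{0..<N}" "ej \<union> ek"] by simp
  qed
  have posS: "(\<Prod>i<s. (real N - real i)) > 0" using sN by (intro prod_pos) auto
  show ?thesis
  proof (cases "Bfull m E N ej ek = {}")
    case True
    then show ?thesis using posS by simp
  next
    case False
    then obtain \<phi> a b where p: "\<phi> \<in> {0..<m} \<rightarrow>\<^sub>E {0..<N}" "inj_on \<phi> {0..<m}" and ab: "a \<in> E" "b \<in> E" "\<phi>`a = ej" "\<phi>`b = ek"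
      unfolding Bfull_def by blast
    have "\<phi> \<in> {0..<m} \<rightarrow> {0..<N}" using p(1) by (auto simp: PiE_iff)
    then have mN: "m \<le> N" using card_inj[of \<phi> "{0..<m}" "{0..<N}"] p(2) by simp
    have ab_sub: "a \<union> b \<subseteq> {0..<m}" using ab(1,2) EH vp_sub by blast
    have sm: "s \<le> m"
    proof -
      have "s = card (\<phi> ` (a \<union> b))" using s ab by (simp add: image_Un)
      also have "\<dots> \<le> card (a \<union> b)" by (rule card_image_le) (use ab_sub finite_subset in blast)
      also have "\<dots> \<le> m" using card_mono[OF _ ab_sub] by simp
      finally show ?thesis .
    qed
    have Fpos: "F > 0" unfolding F_def using mN by (intro prod_pos) auto
    have cC: "card (C a b) \<le> K * F" if "a \<in> E" "b \<in> E" for a b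
    proof -
      have "a \<subseteq> {0..<m}" "b \<subseteq> {0..<m}" using that EH vp_sub by blast+
      from C_bound[OF _ _ this, of "{0..<N}" ej ek]
      have "card (C a b) \<le> card ((\<lambda>\<phi>. restrict \<phi> (a\<union>b)) ` C a b) * F"
        unfolding C_def F_def s by simp
      also have "\<dots> \<le> K * F" using K[OF that] unfolding C_def by simp
      finally show ?thesis .
    qed
    have "Bfull m E N ej ek \<subseteq> (\<Union>(a,b)\<in>E \<times> E. C a b)"
    proof
      fix \<phi> assume "\<phi> \<in> Bfull m E N ej ek"
      then obtain a b where "a \<in> E" "b \<in> E" "\<phi> \<in> C a b" unfolding Bfull_def C_def by blast
      then show "\<phi> \<in> (\<Union>(a,b)\<in>E \<times> E. C a b)" by blast
    qed
    then have "card (Bfull m E N ej ek) \<le> card (\<Union>(a,b)\<in>E \<times> E. C a b)"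
    proof (rule card_mono[rotated])
      have "C a b \<subseteq> {0..<m} \<rightarrow>\<^sub>E {0..<N}" for a b unfolding C_def by blast
      then have "(\<Union>(a,b)\<in>E \<times> E. C a b) \<subseteq> {0..<m} \<rightarrow>\<^sub>E {0..<N}" by blast
      then show "finite (\<Union>(a,b)\<in>E \<times> E. C a b)" by (rule finite_subset) (simp add: finite_PiE)
    qed
    also have "\<dots> \<le> (\<Sum>(a,b)\<in>E \<times> E. card (C a b))"
      using card_UN_le[of "E \<times> E" "\<lambda>(a,b). C a b"] finE by (simp add: case_prod_beta)
    also have "\<dots> \<le> (\<Sum>(a,b)\<in>E \<times> E. K * F)" by (rule sum_mono) (use cC in auto)
    also have "\<dots> = card E * card E * (K * F)" by (simp add: card_cartesian_product)
    finally have "real (card (Bfull m E N ej ek)) \<le> real (card E * card E * (K * F))"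
      by (simp only: of_nat_le_iff)
    then have cB: "real (card (Bfull m E N ej ek)) \<le> real (card E)^2 * real K * real F"
      by (simp add: power2_eq_square mult.assoc)
    have P: "(\<Prod>i<m. (real N - real i)) = (\<Prod>i<s. (real N - real i)) * real F"
      unfolding F_def using prod_split[OF sm mN] .
    have "real (card (Bfull m E N ej ek)) / ((\<Prod>i<s. (real N - real i)) * real F)
        \<le> (real (card E)^2 * real K * real F) / ((\<Prod>i<s. (real N - real i)) * real F)"
      by (rule divide_right_mono[OF cB]) (use posS Fpos in simp)
    also have "\<dots> = real (card E)^2 * real K / (\<Prod>i<s. (real N - real i))"
      by (rule nonzero_mult_divide_mult_cancel_right) (use Fpos in simp)
    finally show ?thesis unfolding P .
  qed
qed




lemma choose2_real: "real (N choose 2) = real N * (real N - 1) / 2"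
proof -
  have "even (N * (N - 1))" by (cases "even N") auto
  then have "2 * (N choose 2) = N * (N - 1)" unfolding choose_two by simp
  then have "2 * real (N choose 2) = real N * real (N - 1)" by (metis of_nat_mult of_nat_numeral)
  moreover have "real (N - 1) = real N - 1" if "N \<ge> 1" using that by simp
  ultimately show ?thesis by (cases "N = 0") auto
qed

lemma quad3: fixes x :: real assumes "x \<ge> 3" shows "x * (x - 1) / 2 \<le> (4 * (x - 2))^2"
proof -
  have eq: "(4*(x-2))^2 - x*(x-1)/2 = 31/2*(x-3)^2 + 59/2*x - 151/2"
    by (simp add: power2_eq_square field_simps)
  have "0 \<le> 31/2*(x-3)^2" by simp
  then have "0 \<le> (4*(x-2))^2 - x*(x-1)/2" unfolding eq using assms by linarith
  then show ?thesis by simp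
qed

lemma per_i_shared:
  assumes EH: "E \<subseteq> vertex_pairs m" and ej: "ej \<in> vertex_pairs N" and ek: "ek \<in> vertex_pairs N"
    and ne: "ej \<noteq> ek" and i: "ej \<inter> ek \<noteq> {}"
  shows "real N * (real N - 1) / 2 * (real (card (Bfull m E N ej ek)) / (\<Prod>i<m. (real N - real i)))
         \<le> 2 * real (card E)^2 / sqrt (real (N choose 2))"
proof -
  have c3: "card (ej \<union> ek) = 3" using vp_card3[OF ej ek ne i] .
  have N3: "N \<ge> 3"
  proof -
    have "ej \<union> ek \<subseteq> {0..<N}" using vp_sub[OF ej] vp_sub[OF ek] by blast
    then show ?thesis using c3 card_mono[of "{0..<N}" "ej \<union> ek"] by simp
  qed
  have K: "card ((\<lambda>\<phi>. restrict \<phi> (a\<union>b)) ` {\<phi> \<in> {0..<m} \<rightarrow>\<^sub>E {0..<N}. inj_on \<phi> {0..<m} \<and> \<phi>`a = ej \<and> \<phi>`b = ek}) \<le> 1"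
    if "a \<in> E" "b \<in> E" for a b
    using Psi_le1[of "{0..<m}" "{0..<N}" a b ej N ek] that EH vp_sub ej ek ne i by blast
  have r: "real (card (Bfull m E N ej ek)) / (\<Prod>i<m. (real N - real i))
         \<le> real (card E)^2 * real 1 / (\<Prod>i<3. (real N - real i))"
    using Bfull_ratio[OF EH ej ek K c3[symmetric]] by simp
  have p3: "(\<Prod>i<3. (real N - real i)) = real N * (real N - 1) * (real N - 2)"
    by (simp add: numeral_3_eq_3 lessThan_Suc)
  define c where "c = real (card E)^2"
  have c0: "c \<ge> 0" unfolding c_def by simp
  have Np: "real N * (real N - 1) > 0" using N3 by simp
  have "real N * (real N - 1) / 2 * (real (card (Bfull m E N ej ek)) / (\<Prod>i<m. (real N - real i)))
      \<le> real N * (real N - 1) / 2 * (c / (real N * (real N - 1) * (real N - 2)))"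
    using r unfolding p3 c_def by (intro mult_left_mono) (use Np in auto)
  also have "\<dots> = c / (2 * (real N - 2))"
  proof -
    have "real N - 2 > 0" using N3 by simp
    moreover have "\<And>a d c::real. a \<noteq> 0 \<Longrightarrow> d \<noteq> 0 \<Longrightarrow> a / 2 * (c / (a * d)) = c / (2 * d)"
      by (simp add: field_simps)
    ultimately show ?thesis using Np by (metis less_irrefl)
  qed
  also have "\<dots> \<le> 2 * c / sqrt (real (N choose 2))"
  proof -
    have n: "real (N choose 2) = real N * (real N - 1) / 2" by (rule choose2_real)
    have npos: "real (N choose 2) > 0" unfolding n using Np by simp
    have x3: "real N \<ge> 3" using N3 by simp
    have h: "0 \<le> (real N - 3)^2" by simp
    have "real N * (real N - 1) / 2 \<le> (4 * (real N - 2))^2"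
      using quad3[OF x3] .
    then have "real (N choose 2) \<le> (4 * (real N - 2))^2" unfolding n .
    then have sq: "sqrt (real (N choose 2)) \<le> 4 * (real N - 2)" using x3 by (intro real_le_lsqrt) auto
    have sp: "sqrt (real (N choose 2)) > 0" using npos by simp
    have "c / (2 * (real N - 2)) = 2 * c / (4 * (real N - 2))"
      using nonzero_mult_divide_mult_cancel_left[of 2 c "2 * (real N - 2)"] by simp
    also have "\<dots> \<le> 2 * c / sqrt (real (N choose 2))"
      by (rule divide_left_mono[OF sq]) (use c0 sp x3 in auto)
    finally show ?thesis .
  qed
  finally show ?thesis unfolding c_def .
qed

lemma quad4: fixes x :: real assumes "x \<ge> 4" shows "x * (x - 1) / 2 / 3 \<le> (x - 2) * (x - 3)"
proof -
  have eq: "(x - 2) * (x - 3) - x * (x - 1) / 2 / 3 = 5/6*(x-4)^2 + 11/6*x - 44/6"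
    by (simp add: power2_eq_square field_simps)
  have "0 \<le> 5/6*(x-4)^2" by simp
  then have "0 \<le> (x - 2) * (x - 3) - x * (x - 1) / 2 / 3" unfolding eq using assms by linarith
  then show ?thesis by simp
qed

lemma per_i_disj:
  assumes EH: "E \<subseteq> vertex_pairs m" and ej: "ej \<in> vertex_pairs N" and ek: "ek \<in> vertex_pairs N"
    and i: "ej \<inter> ek = {}"
  shows "real N * (real N - 1) / 2 * (real (card (Bfull m E N ej ek)) / (\<Prod>i<m. (real N - real i)))
         \<le> 6 * real (card E)^2 / real (N choose 2)"
proof -
  have c4: "card (ej \<union> ek) = 4" using vp_card4[OF ej ek i] .
  have N4: "N \<ge> 4"
  proof -
    have "ej \<union> ek \<subseteq> {0..<N}" using vp_sub[OF ej] vp_sub[OF ek] by blast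
    then show ?thesis using c4 card_mono[of "{0..<N}" "ej \<union> ek"] by simp
  qed
  have K: "card ((\<lambda>\<phi>. restrict \<phi> (a\<union>b)) ` {\<phi> \<in> {0..<m} \<rightarrow>\<^sub>E {0..<N}. inj_on \<phi> {0..<m} \<and> \<phi>`a = ej \<and> \<phi>`b = ek}) \<le> 4"
    if ab: "a \<in> E" "b \<in> E" for a b
  proof -
    have "a \<in> vertex_pairs m" "b \<in> vertex_pairs m" using ab EH by auto
    then obtain p w where "p \<in> a" "w \<in> b" using vp_ne by blast
    moreover have "a \<subseteq> {0..<m}" "b \<subseteq> {0..<m}" using \<open>a \<in> vertex_pairs m\<close> \<open>b \<in> vertex_pairs m\<close> vp_sub by auto
    ultimately show ?thesis using Psi_le4[of "{0..<m}" "{0..<N}" a b ej N ek p w] ej ek by simp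
  qed
  have r: "real (card (Bfull m E N ej ek)) / (\<Prod>i<m. (real N - real i))
         \<le> real (card E)^2 * real 4 / (\<Prod>i<4. (real N - real i))"
    using Bfull_ratio[OF EH ej ek K c4[symmetric]] by simp
  have p4: "(\<Prod>i<4. (real N - real i)) = (real N * (real N - 1)) * ((real N - 2) * (real N - 3))"
    by (simp add: numeral_eq_Suc lessThan_Suc algebra_simps)
  define c where "c = real (card E)^2"
  have c0: "c \<ge> 0" unfolding c_def by simp
  define a where "a = real N * (real N - 1)"
  define e where "e = (real N - 2) * (real N - 3)"
  have x4: "real N \<ge> 4" using N4 by simp
  have ap: "a > 0" unfolding a_def using x4 by simp
  have ep: "e > 0" unfolding e_def using x4 by simp
  have "real N * (real N - 1) / 2 * (real (card (Bfull m E N ej ek)) / (\<Prod>i<m. (real N - real i)))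
      \<le> a / 2 * (c * 4 / (a * e))"
    using r unfolding p4 c_def a_def[symmetric] e_def[symmetric] by (intro mult_left_mono) (use ap in auto)
  also have "\<dots> = 2 * c / e"
  proof -
    have "\<And>a e c::real. a \<noteq> 0 \<Longrightarrow> e \<noteq> 0 \<Longrightarrow> a / 2 * (c * 4 / (a * e)) = 2 * c / e"
      by (simp add: field_simps)
    then show ?thesis using ap ep by (metis less_irrefl)
  qed
  also have "\<dots> \<le> 2 * c / (a / 2 / 3)"
    by (rule divide_left_mono) (use quad4[OF x4] ap ep c0 in \<open>auto simp: a_def e_def\<close>)
  also have "\<dots> = 6 * c / real (N choose 2)"
    unfolding choose2_real a_def[symmetric] by (simp add: field_simps)
  finally show ?thesis unfolding c_def .
qed




lemma P_nonneg: "(\<Prod>i<m. (real N - real i)) \<ge> 0"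
proof (cases "m \<le> N")
  case True then show ?thesis by (intro prod_nonneg) auto
next
  case False
  then have "N \<in> {..<m}" by simp
  then have "(\<Prod>i<m. (real N - real i)) = (real N - real N) * (\<Prod>i\<in>{..<m} - {N}. (real N - real i))"
    by (rule prod.remove[OF finite_lessThan])
  then have "(\<Prod>i<m. (real N - real i)) = 0" by simp
  then show ?thesis by linarith
qed

definition Bset where
  "Bset m E N ej ek G = {\<phi> \<in> inj_homs m E N (insert ej (insert ek G)). (\<exists>a\<in>E. \<phi>`a = ej) \<and> (\<exists>b\<in>E. \<phi>`b = ek)}"

lemma gen_alg: fixes a b c d B P \<beta> :: real
  assumes "a - b - c + d = B"
  shows "\<beta> * (a / P) - \<beta> * (b / P) - (\<beta> * (c / P) - \<beta> * (d / P)) = \<beta> * (B / P)"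
proof -
  have "B / P = a / P - b / P - c / P + d / P" unfolding assms[symmetric] by (simp add: diff_divide_distrib add_divide_distrib)
  have "\<beta> * (a / P) - \<beta> * (b / P) - (\<beta> * (c / P) - \<beta> * (d / P)) = \<beta> * (a / P - b / P - c / P + d / P)"
    by (simp add: algebra_simps)
  then show ?thesis using \<open>B / P = _\<close> by simp
qed

lemma second_diff:
  assumes ne: "ej \<noteq> ek" and j: "ej \<notin> G" and k: "ek \<notin> G"
  shows "subgraph_count N l \<beta> m E (insert ej (insert ek G)) - subgraph_count N l \<beta> m E (insert ek G)
        - (subgraph_count N l \<beta> m E (insert ej G) - subgraph_count N l \<beta> m E G)
       = real N * (real N - 1) * (\<Sum>i=1..l. \<beta> i * (real (card (Bset (m i) (E i) N ej ek G)) / (\<Prod>j<m i. (real N - real j))))"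
proof -
  have t: "\<beta> i * hom_density (m i) (E i) N (insert ej (insert ek G)) - \<beta> i * hom_density (m i) (E i) N (insert ek G)
     - (\<beta> i * hom_density (m i) (E i) N (insert ej G) - \<beta> i * hom_density (m i) (E i) N G)
     = \<beta> i * (real (card (Bset (m i) (E i) N ej ek G)) / (\<Prod>j<m i. (real N - real j)))" for i
  proof -
    have "real_of_int (int (card (inj_homs (m i) (E i) N (insert ej (insert ek G)))) - int (card (inj_homs (m i) (E i) N (insert ek G)))
           - int (card (inj_homs (m i) (E i) N (insert ej G))) + int (card (inj_homs (m i) (E i) N G)))
         = real_of_int (int (card (Bset (m i) (E i) N ej ek G)))"
      using incl_excl[OF ne j k, of "m i" "E i" N] unfolding Bset_def by simp
    then have "real (card (inj_homs (m i) (E i) N (insert ej (insert ek G)))) - real (card (inj_homs (m i) (E i) N (insert ek G)))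
           - real (card (inj_homs (m i) (E i) N (insert ej G))) + real (card (inj_homs (m i) (E i) N G))
         = real (card (Bset (m i) (E i) N ej ek G))" by simp
    then show ?thesis unfolding hom_density_def by (rule gen_alg)
  qed
  let ?h = "\<lambda>S i. \<beta> i * hom_density (m i) (E i) N S"
  have "subgraph_count N l \<beta> m E (insert ej (insert ek G)) - subgraph_count N l \<beta> m E (insert ek G)
        - (subgraph_count N l \<beta> m E (insert ej G) - subgraph_count N l \<beta> m E G)
      = real N * (real N - 1) * ((\<Sum>i=1..l. ?h (insert ej (insert ek G)) i) - (\<Sum>i=1..l. ?h (insert ek G) i)
          - ((\<Sum>i=1..l. ?h (insert ej G) i) - (\<Sum>i=1..l. ?h G i)))"
    unfolding subgraph_count_def by (simp only: right_diff_distrib)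
  also have "(\<Sum>i=1..l. ?h (insert ej (insert ek G)) i) - (\<Sum>i=1..l. ?h (insert ek G) i)
          - ((\<Sum>i=1..l. ?h (insert ej G) i) - (\<Sum>i=1..l. ?h G i))
      = (\<Sum>i=1..l. ?h (insert ej (insert ek G)) i - ?h (insert ek G) i - (?h (insert ej G) i - ?h G i))"
    by (simp only: sum_subtractf)
  also have "\<dots> = (\<Sum>i=1..l. \<beta> i * (real (card (Bset (m i) (E i) N ej ek G)) / (\<Prod>j<m i. (real N - real j))))"
    by (rule sum.cong[OF refl]) (rule t)
  finally show ?thesis .
qed





lemma abs_sum_bound:
  assumes "\<And>i. i \<in> A \<Longrightarrow> 0 \<le> T i" "\<And>i. i \<in> A \<Longrightarrow> T i \<le> W i"
  shows "\<bar>\<Sum>i\<in>A. (\<beta> i :: real) * T i\<bar> \<le> (\<Sum>i\<in>A. \<bar>\<beta> i\<bar> * W i)"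
proof -
  have "\<bar>\<Sum>i\<in>A. \<beta> i * T i\<bar> \<le> (\<Sum>i\<in>A. \<bar>\<beta> i * T i\<bar>)" by (rule sum_abs)
  also have "\<dots> \<le> (\<Sum>i\<in>A. \<bar>\<beta> i\<bar> * W i)"
  proof (rule sum_mono)
    fix i assume "i \<in> A"
    then have "\<bar>\<beta> i * T i\<bar> = \<bar>\<beta> i\<bar> * T i" using assms(1) by (simp add: abs_mult)
    also have "\<dots> \<le> \<bar>\<beta> i\<bar> * W i" using assms(2)[OF \<open>i \<in> A\<close>] by (intro mult_left_mono) auto
    finally show "\<bar>\<beta> i * T i\<bar> \<le> \<bar>\<beta> i\<bar> * W i" .
  qed
  finally show ?thesis .
qed

lemma Bset_le_Bfull:
  "real N * (real N - 1) / 2 * (real (card (Bset m E N ej ek G)) / (\<Prod>j<m. (real N - real j)))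
   \<le> real N * (real N - 1) / 2 * (real (card (Bfull m E N ej ek)) / (\<Prod>j<m. (real N - real j)))"
proof -
  have fin: "finite (Bfull m E N ej ek)" unfolding Bfull_def
    by (rule finite_subset[OF _ finite_PiE[of "{0..<m}" "\<lambda>_. {0..<N}"]]) auto
  have "card (Bset m E N ej ek G) \<le> card (Bfull m E N ej ek)"
    unfolding Bset_def by (rule card_mono[OF fin B_sub_Bfull])
  then have "real (card (Bset m E N ej ek G)) / (\<Prod>j<m. (real N - real j))
      \<le> real (card (Bfull m E N ej ek)) / (\<Prod>j<m. (real N - real j))"
    by (intro divide_right_mono) (auto simp: P_nonneg)
  moreover have "real N * (real N - 1) / 2 \<ge> 0" by (cases N) auto
  ultimately show ?thesis by (rule mult_left_mono)
qed

lemma T_nonneg: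
  "0 \<le> real N * (real N - 1) / 2 * (real (card (Bset m E N ej ek G)) / (\<Prod>j<m. (real N - real j)))"
proof -
  have "real N * (real N - 1) / 2 \<ge> 0" by (cases N) auto
  moreover have "real (card (Bset m E N ej ek G)) / (\<Prod>j<m. (real N - real j)) \<ge> 0"
    using P_nonneg by simp
  ultimately show ?thesis by (rule mult_nonneg_nonneg)
qed

lemma rewrite_half:
  "real N * (real N - 1) * (\<Sum>i=1..l. \<beta> i * r i) / 2 = (\<Sum>i=1..l. \<beta> i * (real N * (real N - 1) / 2 * r i))"
proof -
  have "real N * (real N - 1) * (\<Sum>i=1..l. \<beta> i * r i) / 2 = (real N * (real N - 1) / 2) * (\<Sum>i=1..l. \<beta> i * r i)"
    by simp
  also have "\<dots> = (\<Sum>i=1..l. (real N * (real N - 1) / 2) * (\<beta> i * r i))" by (rule sum_distrib_left)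
  also have "\<dots> = (\<Sum>i=1..l. \<beta> i * (real N * (real N - 1) / 2 * r i))"
    by (rule sum.cong[OF refl]) (simp add: algebra_simps)
  finally show ?thesis .
qed

lemma core:
  fixes \<beta> :: "nat \<Rightarrow> real"
  assumes H: "\<And>i. i \<in> {1..l} \<Longrightarrow> E i \<subseteq> vertex_pairs (m i)"
    and ej: "ej \<in> vertex_pairs N" and ek: "ek \<in> vertex_pairs N" and ne: "ej \<noteq> ek"
    and j: "ej \<notin> G" and k: "ek \<notin> G"
  defines "Q \<equiv> (subgraph_count N l \<beta> m E (insert ej (insert ek G)) - subgraph_count N l \<beta> m E (insert ek G)
        - (subgraph_count N l \<beta> m E (insert ej G) - subgraph_count N l \<beta> m E G)) / 2"
  shows "(ej \<inter> ek \<noteq> {} \<longrightarrow> \<bar>Q\<bar> \<le> (\<Sum>i=1..l. 2 * \<bar>\<beta> i\<bar> * real (card (E i))^2 / sqrt (real (N choose 2))))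
       \<and> (ej \<inter> ek = {} \<longrightarrow> \<bar>Q\<bar> \<le> (\<Sum>i=1..l. 6 * \<bar>\<beta> i\<bar> * real (card (E i))^2 / real (N choose 2)))"
proof -
  define T where "T i = real N * (real N - 1) / 2 * (real (card (Bset (m i) (E i) N ej ek G)) / (\<Prod>j<m i. (real N - real j)))" for i
  have QT: "Q = (\<Sum>i=1..l. \<beta> i * T i)"
    unfolding Q_def second_diff[OF ne j k] T_def by (rule rewrite_half)
  have T0: "0 \<le> T i" for i unfolding T_def by (rule T_nonneg)
  show ?thesis
  proof (intro conjI impI)
    assume i: "ej \<inter> ek \<noteq> {}"
    have "\<bar>Q\<bar> \<le> (\<Sum>i=1..l. \<bar>\<beta> i\<bar> * (2 * real (card (E i))^2 / sqrt (real (N choose 2))))"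
      unfolding QT
    proof (rule abs_sum_bound[OF T0])
      fix i assume "i \<in> {1..l}"
      show "T i \<le> 2 * real (card (E i))^2 / sqrt (real (N choose 2))"
        unfolding T_def using order_trans[OF Bset_le_Bfull per_i_shared[OF H[OF \<open>i \<in> {1..l}\<close>] ej ek ne i]] .
    qed
    also have "\<dots> = (\<Sum>i=1..l. 2 * \<bar>\<beta> i\<bar> * real (card (E i))^2 / sqrt (real (N choose 2)))"
      by (rule sum.cong[OF refl]) simp
    finally show "\<bar>Q\<bar> \<le> (\<Sum>i=1..l. 2 * \<bar>\<beta> i\<bar> * real (card (E i))^2 / sqrt (real (N choose 2)))" .
  next
    assume i: "ej \<inter> ek = {}"
    have "\<bar>Q\<bar> \<le> (\<Sum>i=1..l. \<bar>\<beta> i\<bar> * (6 * real (card (E i))^2 / real (N choose 2)))"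
      unfolding QT
    proof (rule abs_sum_bound[OF T0])
      fix i assume "i \<in> {1..l}"
      show "T i \<le> 6 * real (card (E i))^2 / real (N choose 2)"
        unfolding T_def using order_trans[OF Bset_le_Bfull per_i_disj[OF H[OF \<open>i \<in> {1..l}\<close>] ej ek i]] .
    qed
    also have "\<dots> = (\<Sum>i=1..l. 6 * \<bar>\<beta> i\<bar> * real (card (E i))^2 / real (N choose 2))"
      by (rule sum.cong[OF refl]) simp
    finally show "\<bar>Q\<bar> \<le> (\<Sum>i=1..l. 6 * \<bar>\<beta> i\<bar> * real (card (E i))^2 / real (N choose 2))" .
  qed
qed


lemma orient:
  assumes ne: "ej \<noteq> ek" and kX: "ek \<in> X" and kY: "ek \<notin> Y" and eq: "X - {ek} = Y - {ek}"
    and G_def: "G = X - {ej, ek}"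
  shows "disc_deriv F ej X - disc_deriv F ej Y
       = (F (insert ej (insert ek G)) - F (insert ek G) - (F (insert ej G) - F G)) / 2"
    and "ej \<notin> G" and "ek \<notin> G"
proof -
  have YG: "Y - {ej} = G"
  proof -
    have "Y - {ej} = (Y - {ek}) - {ej}" using kY by auto
    also have "\<dots> = G" unfolding eq[symmetric] G_def by auto
    finally show ?thesis .
  qed
  have iY: "insert ej Y = insert ej G" unfolding YG[symmetric] by simp
  have XG: "X - {ej} = insert ek G" unfolding G_def using kX ne by auto
  have iX: "insert ej X = insert ej (insert ek G)" unfolding XG[symmetric] by simp
  show "disc_deriv F ej X - disc_deriv F ej Y
       = (F (insert ej (insert ek G)) - F (insert ek G) - (F (insert ej G) - F G)) / 2"
    unfolding disc_deriv_def iX XG iY YG by (simp add: diff_divide_distrib)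
  show "ej \<notin> G" "ek \<notin> G" unfolding G_def by auto
qed

theorem lemma27:
  fixes N l :: nat and \<beta> :: "nat \<Rightarrow> real" and m :: "nat \<Rightarrow> nat"
    and E :: "nat \<Rightarrow> nat set set" and X Y :: "nat set set" and ej ek :: "nat set"
  assumes H: "\<And>i. i \<in> {1..l} \<Longrightarrow> E i \<subseteq> vertex_pairs (m i)"
    and X: "X \<subseteq> vertex_pairs N" and Y: "Y \<subseteq> vertex_pairs N"
    and ej: "ej \<in> vertex_pairs N" and ek: "ek \<in> vertex_pairs N"
    and XY: "\<And>e. e \<in> vertex_pairs N \<Longrightarrow> e \<noteq> ek \<Longrightarrow> (e \<in> X \<longleftrightarrow> e \<in> Y)"
  shows "(ej \<inter> ek \<noteq> {} \<longrightarrow>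
            \<bar>disc_deriv (subgraph_count N l \<beta> m E) ej X - disc_deriv (subgraph_count N l \<beta> m E) ej Y\<bar>
              \<le> (\<Sum>i=1..l. 2 * \<bar>\<beta> i\<bar> * real (card (E i))^2 / sqrt (real (N choose 2))))
       \<and> (ej \<inter> ek = {} \<longrightarrow>
            \<bar>disc_deriv (subgraph_count N l \<beta> m E) ej X - disc_deriv (subgraph_count N l \<beta> m E) ej Y\<bar>
              \<le> (\<Sum>i=1..l. 6 * \<bar>\<beta> i\<bar> * real (card (E i))^2 / real (N choose 2)))"
proof -
  define F where "F = subgraph_count N l \<beta> m E"
  define b1 where "b1 = (\<Sum>i=1..l. 2 * \<bar>\<beta> i\<bar> * real (card (E i))^2 / sqrt (real (N choose 2)))"
  define b2 where "b2 = (\<Sum>i=1..l. 6 * \<bar>\<beta> i\<bar> * real (card (E i))^2 / real (N choose 2))"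
  have b1: "b1 \<ge> 0" unfolding b1_def by (intro sum_nonneg) simp
  have b2: "b2 \<ge> 0" unfolding b2_def by (intro sum_nonneg) simp
  have eq: "X - {ek} = Y - {ek}"
  proof (rule set_eqI)
    fix e show "e \<in> X - {ek} \<longleftrightarrow> e \<in> Y - {ek}"
    proof (cases "e \<in> vertex_pairs N")
      case True then show ?thesis using XY[OF True] by auto
    next
      case False then show ?thesis using X Y by auto
    qed
  qed
  have main: "(ej \<inter> ek \<noteq> {} \<longrightarrow> \<bar>disc_deriv F ej X - disc_deriv F ej Y\<bar> \<le> b1)
       \<and> (ej \<inter> ek = {} \<longrightarrow> \<bar>disc_deriv F ej X - disc_deriv F ej Y\<bar> \<le> b2)"
  proof (cases "ej = ek")
    case True
    have "insert ek X = insert ek Y"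
    proof -
      have "insert ek X = insert ek (X - {ek})" by simp
      also have "\<dots> = insert ek (Y - {ek})" using eq by simp
      also have "\<dots> = insert ek Y" by simp
      finally show ?thesis .
    qed
    then have "disc_deriv F ej X - disc_deriv F ej Y = 0"
      unfolding disc_deriv_def True using eq by simp
    then show ?thesis using b1 b2 by simp
  next
    case ne: False
    show ?thesis
    proof (cases "ek \<in> X \<longleftrightarrow> ek \<in> Y")
      case True
      have "X = Y"
      proof (rule set_eqI)
        fix e show "e \<in> X \<longleftrightarrow> e \<in> Y"
          using eq True by (cases "e = ek") auto
      qed
      then show ?thesis using b1 b2 by simp
    next
      case False
      then consider "ek \<in> X" "ek \<notin> Y" | "ek \<notin> X" "ek \<in> Y" by blast
      then show ?thesis
      proof cases
        case 1
        note o = orient(1)[OF ne 1 eq refl, where F=F] orient(2,3)[OF ne 1 eq refl]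
        show ?thesis
          apply (unfold o(1))
          apply (unfold F_def b1_def b2_def)
          by (rule core[OF H ej ek ne o(2,3)])
      next
        case 2
        note o = orient(1)[OF ne 2(2,1) eq[symmetric] refl, where F=F] orient(2,3)[OF ne 2(2,1) eq[symmetric] refl]
        have "\<bar>disc_deriv F ej X - disc_deriv F ej Y\<bar> = \<bar>disc_deriv F ej Y - disc_deriv F ej X\<bar>"
          by (rule abs_minus_commute)
        then show ?thesis
          apply (simp only: o(1))
          apply (unfold F_def b1_def b2_def)
          using core[OF H ej ek ne o(2,3)] by simp
      qed
    qed
  qed
  then show ?thesis unfolding F_def b1_def b2_def .
qed


end
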